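(* For every graph $G$, $\operatorname{th}_{\operatorname{H}}(G)=|V(G)|$ if and only if $G$ contains none of $2K_2$, $K_2\cup\overline{K_2}$, $\overline{K_4}$ as an induced subgraph.
   Context: All graphs are finite, simple and undirected; $2K_2$ is two disjoint edges, $K_2\cup\overline{K_2}$ is an edge plus two isolated vertices, and $\overline{K_4}$ is four isolated vertices. Hopping color change rule: a blue vertex $v$ may force a white vertex $w$ to become blue if $v$ has not previously performed a force and every neighbor of $v$ is blue. For an initial blue set $B$, a chronological list of forces of $B$ is a sequence of such forces applied one at a time until no further force is possible; its underlying unordered set is a set of forces of $B$. $B$ is a hopping forcing set if some chronological list of forces of $B$ turns all vertices blue. For a set of forces $\mathcal F$ of $B$, let $\mathcal F^{(0)}=B$ and for $t\geq1$ let $\mathcal F^{(t)}$ be the set of vertices $w\notin U_{t-1}:=\bigcup_{i=0}^{t-1}\mathcal F^{(i)}$ for which there is $(v\to w)\in\mathcal F$ with $v\in U_{t-1}$ and all neighbors of $v$ in $U_{t-1}$. $\operatorname{pt}_{\operatorname{H}}(G;\mathcal F)$ is the least $t$ with $\bigcup_{i=0}^t\mathcal F^{(i)}=V(G)$ ($\infty$ if none); $\operatorname{pt}_{\operatorname{H}}(G;B)$ is the minimum over sets of forces $\mathcal F$ of $B$ ($\infty$ if $B$ is not a hopping forcing set). $\operatorname{th}_{\operatorname{H}}(G)=\min_{B\subseteq V(G)}\big(|B|+\operatorname{pt}_{\operatorname{H}}(G;B)\big)$. *)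

theory Defs
  imports Main "HOL-Library.Extended_Nat"
begin

definition simple_graph :: "'a set \<Rightarrow> ('a \<Rightarrow> 'a \<Rightarrow> bool) \<Rightarrow> bool" where
  "simple_graph V E \<longleftrightarrow> finite V \<and>
     (\<forall>u v. E u v \<longrightarrow> u \<in> V \<and> v \<in> V \<and> u \<noteq> v \<and> E v u)"

definition nbhd :: "'a set \<Rightarrow> ('a \<Rightarrow> 'a \<Rightarrow> bool) \<Rightarrow> 'a \<Rightarrow> 'a set" where
  "nbhd V E v = {u \<in> V. E v u}"

text \<open>Hopping force v -> w is valid with current blue set S and set P of vertices
  that have already performed a force.\<close>
definition hop_force_ok :: "'a set \<Rightarrow> ('a \<Rightarrow> 'a \<Rightarrow> bool) \<Rightarrow> 'a set \<Rightarrow> 'a set \<Rightarrow> 'a \<Rightarrow> 'a \<Rightarrow> bool" where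
  "hop_force_ok V E S P v w \<longleftrightarrow>
     v \<in> S \<and> v \<notin> P \<and> w \<in> V \<and> w \<notin> S \<and> nbhd V E v \<subseteq> S"

fun hop_seq_ok :: "'a set \<Rightarrow> ('a \<Rightarrow> 'a \<Rightarrow> bool) \<Rightarrow> 'a set \<Rightarrow> 'a set \<Rightarrow> ('a \<times> 'a) list \<Rightarrow> bool" where
  "hop_seq_ok V E S P [] = True"
| "hop_seq_ok V E S P ((v, w) # fs) =
     (hop_force_ok V E S P v w \<and> hop_seq_ok V E (insert w S) (insert v P) fs)"

definition chron_list :: "'a set \<Rightarrow> ('a \<Rightarrow> 'a \<Rightarrow> bool) \<Rightarrow> 'a set \<Rightarrow> ('a \<times> 'a) list \<Rightarrow> bool" where
  "chron_list V E B fs \<longleftrightarrow> B \<subseteq> V \<and> hop_seq_ok V E B {} fs \<and>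
     \<not> (\<exists>v w. hop_force_ok V E (B \<union> snd ` set fs) (fst ` set fs) v w)"

definition sets_of_forces :: "'a set \<Rightarrow> ('a \<Rightarrow> 'a \<Rightarrow> bool) \<Rightarrow> 'a set \<Rightarrow> ('a \<times> 'a) set set" where
  "sets_of_forces V E B = {set fs | fs. chron_list V E B fs}"

definition hopping_forcing_set :: "'a set \<Rightarrow> ('a \<Rightarrow> 'a \<Rightarrow> bool) \<Rightarrow> 'a set \<Rightarrow> bool" where
  "hopping_forcing_set V E B \<longleftrightarrow> (\<exists>fs. chron_list V E B fs \<and> B \<union> snd ` set fs = V)"

fun hop_U :: "'a set \<Rightarrow> ('a \<Rightarrow> 'a \<Rightarrow> bool) \<Rightarrow> 'a set \<Rightarrow> ('a \<times> 'a) set \<Rightarrow> nat \<Rightarrow> 'a set" where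
  "hop_U V E B F 0 = B"
| "hop_U V E B F (Suc t) = hop_U V E B F t \<union>
     {w. w \<notin> hop_U V E B F t \<and> (\<exists>v. (v, w) \<in> F \<and> v \<in> hop_U V E B F t \<and>
                                         nbhd V E v \<subseteq> hop_U V E B F t)}"

definition pt_H_forces :: "'a set \<Rightarrow> ('a \<Rightarrow> 'a \<Rightarrow> bool) \<Rightarrow> 'a set \<Rightarrow> ('a \<times> 'a) set \<Rightarrow> enat" where
  "pt_H_forces V E B F =
     (if \<exists>t. hop_U V E B F t = V then enat (LEAST t. hop_U V E B F t = V) else \<infinity>)"

definition pt_H :: "'a set \<Rightarrow> ('a \<Rightarrow> 'a \<Rightarrow> bool) \<Rightarrow> 'a set \<Rightarrow> enat" where
  "pt_H V E B = (if hopping_forcing_set V E B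
                 then (INF F \<in> sets_of_forces V E B. pt_H_forces V E B F) else \<infinity>)"

definition th_H :: "'a set \<Rightarrow> ('a \<Rightarrow> 'a \<Rightarrow> bool) \<Rightarrow> enat" where
  "th_H V E = (INF B \<in> Pow V. enat (card B) + pt_H V E B)"

definition has_induced :: "'a set \<Rightarrow> ('a \<Rightarrow> 'a \<Rightarrow> bool) \<Rightarrow> 'b set \<Rightarrow> ('b \<Rightarrow> 'b \<Rightarrow> bool) \<Rightarrow> bool" where
  "has_induced V E VH EH \<longleftrightarrow> (\<exists>f. inj_on f VH \<and> f ` VH \<subseteq> V \<and>
      (\<forall>x\<in>VH. \<forall>y\<in>VH. EH x y \<longleftrightarrow> E (f x) (f y)))"

text \<open>Pattern graphs on vertex set {0,1,2,3}.\<close>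
definition two_K2_E :: "nat \<Rightarrow> nat \<Rightarrow> bool" where
  "two_K2_E x y \<longleftrightarrow> {x, y} = {0, 1} \<or> {x, y} = {2, 3}"

definition K2_co_K2_E :: "nat \<Rightarrow> nat \<Rightarrow> bool" where
  "K2_co_K2_E x y \<longleftrightarrow> {x, y} = {0, 1}"

definition co_K4_E :: "nat \<Rightarrow> nat \<Rightarrow> bool" where
  "co_K4_E x y \<longleftrightarrow> False"

end

theory Submission imports Defs begin

lemma seq_props:
  "hop_seq_ok V E S P fs \<Longrightarrow> (\<forall>p\<in>set fs. fst p \<notin> P \<and> snd p \<in> V) \<and> distinct (map fst fs)"
proof (induction fs arbitrary: S P)
  case Nil then show ?case by simp
next
  case (Cons a fs)
  obtain v w where a: "a = (v,w)" by (cases a)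
  from Cons.prems a have ok: "hop_force_ok V E S P v w" and r: "hop_seq_ok V E (insert w S) (insert v P) fs" by auto
  from Cons.IH[OF r] ok a show ?case unfolding hop_force_ok_def by force
qed

lemma four_vertices:
  assumes sg: "simple_graph V E" and inV: "u\<in>V" "v\<in>V" "x\<in>V" "y\<in>V"
    and d: "distinct [u,v,x,y]"
    and ne: "\<not>E u x" "\<not>E u y" "\<not>E v x" "\<not>E v y"
  shows "has_induced V E {0::nat..3} two_K2_E \<or> has_induced V E {0::nat..3} K2_co_K2_E \<or>
    has_induced V E {0::nat..3} co_K4_E"
proof -
  have sym: "\<And>a b. E a b = E b a" using sg unfolding simple_graph_def by blast
  have irr: "\<And>a. \<not> E a a" using sg unfolding simple_graph_def by blast
  have S: "{0::nat..3} = {0,1,2,3}" by auto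
  define f where "f = (\<lambda>i::nat. if i=0 then u else if i=1 then v else if i=2 then x else y)"
  define g where "g = (\<lambda>i::nat. if i=0 then x else if i=1 then y else if i=2 then u else v)"
  have fi: "inj_on f {0..3}" "f ` {0..3} \<subseteq> V" using d inV unfolding S f_def inj_on_def by auto
  have gi: "inj_on g {0..3}" "g ` {0..3} \<subseteq> V" using d inV unfolding S g_def inj_on_def by auto
  show ?thesis
  proof (cases "E u v")
    case True
    show ?thesis
    proof (cases "E x y")
      case True
      have "has_induced V E {0::nat..3} two_K2_E" unfolding has_induced_def
        apply (rule exI[of _ f]) using fi \<open>E u v\<close> True ne irr sym[of u v] sym[of x y] sym[of u x] sym[of u y] sym[of v x] sym[of v y]
        unfolding S f_def two_K2_E_def by (auto simp: doubleton_eq_iff)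
      then show ?thesis by blast
    next
      case False
      have "has_induced V E {0::nat..3} K2_co_K2_E" unfolding has_induced_def
        apply (rule exI[of _ f]) using fi \<open>E u v\<close> False ne irr sym[of u v] sym[of x y] sym[of u x] sym[of u y] sym[of v x] sym[of v y]
        unfolding S f_def K2_co_K2_E_def by (auto simp: doubleton_eq_iff)
      then show ?thesis by blast
    qed
  next
    case F1: False
    show ?thesis
    proof (cases "E x y")
      case True
      have "has_induced V E {0::nat..3} K2_co_K2_E" unfolding has_induced_def
        apply (rule exI[of _ g]) using gi F1 True ne irr sym[of u v] sym[of x y] sym[of u x] sym[of u y] sym[of v x] sym[of v y]
        unfolding S g_def K2_co_K2_E_def by (auto simp: doubleton_eq_iff)
      then show ?thesis by blast
    next
      case False
      have "has_induced V E {0::nat..3} co_K4_E" unfolding has_induced_def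
        apply (rule exI[of _ f]) using fi F1 False ne irr sym[of u v] sym[of x y] sym[of u x] sym[of u y] sym[of v x] sym[of v y]
        unfolding S f_def co_K4_E_def by (auto simp: doubleton_eq_iff)
      then show ?thesis by blast
    qed
  qed
qed

lemma from_induced:
  assumes sg: "simple_graph V E"
    and h: "has_induced V E {0::nat..3} two_K2_E \<or> has_induced V E {0::nat..3} K2_co_K2_E \<or>
    has_induced V E {0::nat..3} co_K4_E"
  shows "\<exists>a b c d. a\<in>V \<and> b\<in>V \<and> c\<in>V \<and> d\<in>V \<and> distinct [a,b,c,d] \<and> \<not>E a c \<and> \<not>E a d \<and> \<not>E b c \<and> \<not>E b d"
proof -
  have S: "{0::nat..3} = {0,1,2,3}" by auto
  have pat: "\<And>i j::nat. i \<in> {0,1} \<Longrightarrow> j \<in> {2,3} \<Longrightarrow> \<not> two_K2_E i j \<and> \<not> K2_co_K2_E i j \<and> \<not> co_K4_E i j"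
    unfolding two_K2_E_def K2_co_K2_E_def co_K4_E_def by (auto simp: doubleton_eq_iff)
  from h obtain f P where f: "inj_on f {0..3}" "f ` {0..3} \<subseteq> V" "\<forall>x\<in>{0::nat..3}. \<forall>y\<in>{0..3}. P x y \<longleftrightarrow> E (f x) (f y)"
    and P: "P = two_K2_E \<or> P = K2_co_K2_E \<or> P = co_K4_E"
    unfolding has_induced_def by blast
  have np: "\<And>i j::nat. i \<in> {0,1} \<Longrightarrow> j \<in> {2,3} \<Longrightarrow> \<not> P i j" using P pat by blast
  have ne: "\<And>i j::nat. i \<in> {0,1} \<Longrightarrow> j \<in> {2,3} \<Longrightarrow> \<not> E (f i) (f j)"
    using f(3) np unfolding S by blast
  show ?thesis
    apply (rule exI[of _ "f 0"], rule exI[of _ "f 1"], rule exI[of _ "f 2"], rule exI[of _ "f 3"])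
    using f(1,2) ne unfolding S inj_on_def by auto
qed


lemma U_bound:
  assumes sg: "simple_graph V E"
    and noind: "\<not> (has_induced V E {0::nat..3} two_K2_E \<or> has_induced V E {0::nat..3} K2_co_K2_E \<or>
    has_induced V E {0::nat..3} co_K4_E)"
    and ch: "chron_list V E B fs"
  shows "hop_U V E B (set fs) t \<subseteq> V \<and> card (hop_U V E B (set fs) t) \<le> card B + t"
proof (induction t)
  case 0
  then show ?case using ch unfolding chron_list_def by simp
next
  case (Suc t)
  define A where "A = hop_U V E B (set fs) t"
  define N where "N = {w. w \<notin> A \<and> (\<exists>v. (v, w) \<in> set fs \<and> v \<in> A \<and> nbhd V E v \<subseteq> A)}"
  have AV: "A \<subseteq> V" and cA: "card A \<le> card B + t" using Suc A_def by auto
  have sp: "(\<forall>p\<in>set fs. fst p \<notin> {} \<and> snd p \<in> V) \<and> distinct (map fst fs)"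
    using seq_props[of V E B "{}" fs] ch unfolding chron_list_def by blast
  have eq: "hop_U V E B (set fs) (Suc t) = A \<union> N" unfolding A_def N_def by simp
  have NV: "N \<subseteq> V" using sp unfolding N_def by force
  have sub: "\<forall>x\<in>N. \<forall>y\<in>N. x = y"
  proof (intro ballI, rule ccontr)
    fix x y assume x: "x \<in> N" and y: "y \<in> N" and xy: "x \<noteq> y"
    from x obtain u where u: "(u,x) \<in> set fs" "u \<in> A" "nbhd V E u \<subseteq> A" "x \<notin> A" unfolding N_def by blast
    from y obtain v where v: "(v,y) \<in> set fs" "v \<in> A" "nbhd V E v \<subseteq> A" "y \<notin> A" unfolding N_def by blast
    have inj: "inj_on fst (set fs)" using sp distinct_map by blast
    have uv: "u \<noteq> v" using inj u(1) v(1) xy unfolding inj_on_def by force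
    have xV: "x \<in> V" "y \<in> V" using x y NV by auto
    have ne: "\<not>E u x" "\<not>E u y" "\<not>E v x" "\<not>E v y"
      using u v xV unfolding nbhd_def by auto
    have "distinct [u,v,x,y]" using uv xy u v by auto
    moreover have "u \<in> V" "v \<in> V" using u(2) v(2) AV by auto
    ultimately show False using four_vertices[OF sg _ _ xV(1) xV(2) _ ne(1) ne(2) ne(3) ne(4)] noind by blast
  qed
  have fN: "finite N" using NV sg unfolding simple_graph_def using finite_subset by blast
  have "card N \<le> 1" using sub fN by (simp add: card_le_Suc0_iff_eq)
  then have "card (A \<union> N) \<le> card B + Suc t" using card_Un_le[of A N] cA by linarith
  then show ?case using eq AV NV by auto
qed


lemma enat_add_ge: "enat (c - a) \<le> x \<Longrightarrow> a \<le> c \<Longrightarrow> enat c \<le> enat a + x"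
  by (cases x) auto

lemma th_lower:
  assumes sg: "simple_graph V E"
    and noind: "\<not> (has_induced V E {0::nat..3} two_K2_E \<or> has_induced V E {0::nat..3} K2_co_K2_E \<or>
    has_induced V E {0::nat..3} co_K4_E)"
  shows "enat (card V) \<le> th_H V E"
  unfolding th_H_def
proof (rule INF_greatest)
  fix B assume B: "B \<in> Pow V"
  have fV: "finite V" using sg unfolding simple_graph_def by blast
  have cB: "card B \<le> card V" using B fV by (simp add: card_mono)
  show "enat (card V) \<le> enat (card B) + pt_H V E B"
  proof (cases "hopping_forcing_set V E B")
    case False
    then show ?thesis unfolding pt_H_def by simp
  next
    case True
    have "enat (card V - card B) \<le> (INF F \<in> sets_of_forces V E B. pt_H_forces V E B F)"
    proof (rule INF_greatest)
      fix F assume "F \<in> sets_of_forces V E B"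
      then obtain fs where F: "F = set fs" and ch: "chron_list V E B fs" unfolding sets_of_forces_def by blast
      show "enat (card V - card B) \<le> pt_H_forces V E B F"
      proof (cases "\<exists>t. hop_U V E B F t = V")
        case False then show ?thesis unfolding pt_H_forces_def by simp
      next
        case True
        define T where "T = (LEAST t. hop_U V E B F t = V)"
        have "hop_U V E B F T = V" using LeastI_ex[OF True] unfolding T_def .
        then have "card V \<le> card B + T" using U_bound[OF sg noind ch, of T] F by simp
        then show ?thesis unfolding pt_H_forces_def using True T_def by simp
      qed
    qed
    then show ?thesis unfolding pt_H_def using True cB by (simp add: enat_add_ge)
  qed
qed

lemma th_upper_V: "th_H V E \<le> enat (card V)"
proof -
  have ch: "chron_list V E V []" unfolding chron_list_def hop_force_ok_def by simp
  have hf: "hopping_forcing_set V E V" unfolding hopping_forcing_set_def using ch by auto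
  have mem: "{} \<in> sets_of_forces V E V" unfolding sets_of_forces_def using ch by force
  have p0: "pt_H_forces V E V {} = 0"
  proof -
    have e: "\<exists>t. hop_U V E V {} t = V" by (rule exI[of _ 0]) simp
    show ?thesis unfolding pt_H_forces_def using e by (simp add: zero_enat_def)
  qed
  have "pt_H V E V \<le> 0" unfolding pt_H_def using hf mem p0 by (metis INF_lower)
  then have "enat (card V) + pt_H V E V \<le> enat (card V)" by simp
  then show ?thesis unfolding th_H_def by (meson INF_lower2 Pow_top)
qed

lemma th_upper_induced:
  assumes sg: "simple_graph V E"
    and inV: "a\<in>V" "b\<in>V" "c\<in>V" "d\<in>V" and dist: "distinct [a,b,c,d]"
    and ne: "\<not>E a c" "\<not>E a d" "\<not>E b c" "\<not>E b d"
  shows "th_H V E < enat (card V)"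
proof -
  have fV: "finite V" using sg unfolding simple_graph_def by blast
  have sym: "\<And>x y. E x y \<Longrightarrow> E y x" using sg unfolding simple_graph_def by blast
  define B where "B = V - {c,d}"
  define fs where "fs = [(a,c),(b,d)]"
  have nb_a: "nbhd V E a \<subseteq> B" using ne unfolding nbhd_def B_def by auto
  have nb_b: "nbhd V E b \<subseteq> B" using ne unfolding nbhd_def B_def by auto
  have BV: "B \<union> snd ` set fs = V" unfolding B_def fs_def using inV by auto
  have ch: "chron_list V E B fs"
    unfolding chron_list_def
  proof (intro conjI)
    show "B \<subseteq> V" unfolding B_def by auto
    show "hop_seq_ok V E B {} fs" unfolding fs_def using nb_a nb_b inV dist
      unfolding B_def by (auto simp: hop_force_ok_def)
    show "\<not> (\<exists>v w. hop_force_ok V E (B \<union> snd ` set fs) (fst ` set fs) v w)"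
      unfolding BV hop_force_ok_def by auto
  qed
  have hf: "hopping_forcing_set V E B" unfolding hopping_forcing_set_def using ch BV by auto
  have mem: "set fs \<in> sets_of_forces V E B" unfolding sets_of_forces_def using ch by auto
  have U1: "hop_U V E B (set fs) 1 = V"
  proof -
    have "hop_U V E B (set fs) 1 = B \<union> {w. w \<notin> B \<and> (\<exists>v. (v, w) \<in> set fs \<and> v \<in> B \<and> nbhd V E v \<subseteq> B)}"
      by (simp add: One_nat_def)
    also have "\<dots> = V"
      using nb_a nb_b inV dist unfolding fs_def B_def by auto
    finally show ?thesis .
  qed
  have "pt_H_forces V E B (set fs) \<le> 1"
  proof -
    have "(LEAST t. hop_U V E B (set fs) t = V) \<le> 1" using U1 by (rule Least_le)
    moreover have "\<exists>t. hop_U V E B (set fs) t = V" using U1 by blast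
    ultimately show ?thesis unfolding pt_H_forces_def by (simp add: one_enat_def)
  qed
  then have pt: "pt_H V E B \<le> 1" unfolding pt_H_def using hf mem by (simp add: INF_lower2)
  have "card {c,d} \<le> card V" using fV inV by (intro card_mono) auto
  then have "2 \<le> card V" using dist by simp
  then have cB: "card B + 2 = card V" unfolding B_def using fV inV dist
    by (simp add: card_Diff_subset)
  have "th_H V E \<le> enat (card B) + pt_H V E B"
    unfolding th_H_def by (rule INF_lower) (auto simp: B_def)
  also have "\<dots> \<le> enat (card B) + 1" using pt by (simp add: add_left_mono)
  also have "\<dots> < enat (card V)" using cB by (simp add: one_enat_def)
  finally show ?thesis .
qed

theorem mainTheorem16:
  fixes V :: "'a set" and E :: "'a \<Rightarrow> 'a \<Rightarrow> bool"
  assumes "simple_graph V E"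
  shows "th_H V E = enat (card V) \<longleftrightarrow>
    \<not> has_induced V E {0::nat..3} two_K2_E \<and>
    \<not> has_induced V E {0::nat..3} K2_co_K2_E \<and>
    \<not> has_induced V E {0::nat..3} co_K4_E"
proof
  assume th: "th_H V E = enat (card V)"
  show "\<not> has_induced V E {0::nat..3} two_K2_E \<and>
    \<not> has_induced V E {0::nat..3} K2_co_K2_E \<and>
    \<not> has_induced V E {0::nat..3} co_K4_E"
  proof (rule ccontr)
    assume "\<not> ?thesis"
    then obtain a b c d where "a\<in>V" "b\<in>V" "c\<in>V" "d\<in>V" "distinct [a,b,c,d]"
      "\<not>E a c" "\<not>E a d" "\<not>E b c" "\<not>E b d"
      using from_induced[OF assms] by blast
    then have "th_H V E < enat (card V)" using th_upper_induced[OF assms] by blast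
    then show False using th by simp
  qed
next
  assume "\<not> has_induced V E {0::nat..3} two_K2_E \<and>
    \<not> has_induced V E {0::nat..3} K2_co_K2_E \<and>
    \<not> has_induced V E {0::nat..3} co_K4_E"
  then have "enat (card V) \<le> th_H V E" using th_lower[OF assms] by blast
  then show "th_H V E = enat (card V)" using th_upper_V[of V E] by simp
qed

end
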